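(* Let $\mathcal E$ be an environment and $t_0,t_1$ closed normal forms with $t_0\approx_{\mathcal E}t_1$. Then for every context $C$ such that $C[t_0]$ and $C[t_1]$ are closed, $C[t_0]\approx_{\mathcal E}C[t_1]$.
   Context: Terms of $\lambda_S$: $t ::= x \mid \lambda x.t \mid t\,t \mid \mathcal{S}k.t \mid \langle t\rangle$ (shift binds $k$; $\langle\cdot\rangle$ reset), up to $\alpha$-conversion. Values $v::=\lambda x.t$. Pure contexts $E ::= \Box \mid v\,E \mid E\,t$; evaluation contexts $F ::= \Box \mid v\,F \mid F\,t \mid \langle F\rangle$; contexts $C ::= \Box \mid \lambda x.C \mid t\,C \mid C\,t \mid \mathcal{S}k.C \mid \langle C\rangle$. Reduction: $F[(\lambda x.t)v]\to F[t\{v/x\}]$; $F[\langle E[\mathcal Sk.t]\rangle]\to F[\langle t\{\lambda x.\langle E[x]\rangle/k\}\rangle]$ ($x\notin\mathrm{fv}(E)$); $F[\langle v\rangle]\to F[v]$; $\to^*$ reflexive-transitive closure. Stuck term: not a value and irreducible; normal form: value or stuck term. Closures: for $R$ a relation on closed terms, $\widetilde R$ is the smallest relation containing $R$, all $(x,x)$, closed under all term constructors, restricted to closed terms; $\widehat R$ is the smallest relation on closed evaluation contexts with $\Box\widehat R\Box$, $v_0F_0\widehat Rv_1F_1$ if $F_0\widehat RF_1,v_0\widetilde Rv_1$; $F_0t_0\widehat RF_1t_1$ if $F_0\widehat RF_1,t_0\widetilde Rt_1$; $\langle F_0\rangle\widehat R\langle F_1\rangle$ if $F_0\widehat RF_1$.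 Environmental bisimilarity: an environment $\mathcal E$ is a relation on closed normal forms relating values only with values and stuck terms only with stuck terms; an environmental relation $\mathcal X$ is a set of environments and triples $(\mathcal E,t_0,t_1)$ with $t_0,t_1$ closed, written $t_0\mathcal X_{\mathcal E}t_1$. $\mathcal X$ is an environmental bisimulation if (1) whenever $t_0\mathcal X_{\mathcal E}t_1$: (a) $t_0\to t_0'$ implies $t_1\to^*t_1'$ with $t_0'\mathcal X_{\mathcal E}t_1'$; (b) if $t_0$ is a value $v_0$ then $t_1\to^*v_1$, a value, with $\mathcal E\cup\{(v_0,v_1)\}\in\mathcal X$; (c) if $t_0$ is stuck then $t_1\to^*t_1'$ stuck with $\mathcal E\cup\{(t_0,t_1')\}\in\mathcal X$; (d) symmetric conditions for $t_1$; (2) whenever $\mathcal E\in\mathcal X$: (a) $(\lambda x.t_0)\mathcal E(\lambda x.t_1)$ and $v_0\widetilde{\mathcal E}v_1$ imply $t_0\{v_0/x\}\mathcal X_{\mathcal E}t_1\{v_1/x\}$; (b) $E_0[\mathcal Sk.t_0]\mathcal EE_1[\mathcal Sk.t_1]$ and pure $E_0'\widehat{\mathcal E}E_1'$ imply $\langle t_0\{\lambda x.\langle E_0'[E_0[x]]\rangle/k\}\rangle\mathcal X_{\mathcal E}\langle t_1\{\lambda x.\langle E_1'[E_1[x]]\rangle/k\}\rangle$, $x$ fresh. $\approx$ is the largest environmental bisimulation; $t_0\approx_{\mathcal E}t_1$ means $(\mathcal E,t_0,t_1)\in\approx$. *)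

theory Defs
  imports Main
begin

section \<open>Terms of lambda_S (de Bruijn indices, i.e. terms up to alpha-conversion)\<close>

datatype trm =
    Var nat
  | Lam trm
  | App trm trm
  | Shift trm          (* S k.t, binds k = index 0 *)
  | Reset trm

fun lift :: "nat \<Rightarrow> trm \<Rightarrow> trm" where
  "lift k (Var i) = (if i < k then Var i else Var (Suc i))"
| "lift k (Lam t) = Lam (lift (Suc k) t)"
| "lift k (App t u) = App (lift k t) (lift k u)"
| "lift k (Shift t) = Shift (lift (Suc k) t)"
| "lift k (Reset t) = Reset (lift k t)"

fun subst :: "nat \<Rightarrow> trm \<Rightarrow> trm \<Rightarrow> trm" where
  "subst k s (Var i) = (if i < k then Var i else if i = k then s else Var (i - 1))"
| "subst k s (Lam t) = Lam (subst (Suc k) (lift 0 s) t)"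
| "subst k s (App t u) = App (subst k s t) (subst k s u)"
| "subst k s (Shift t) = Shift (subst (Suc k) (lift 0 s) t)"
| "subst k s (Reset t) = Reset (subst k s t)"

(* t{v/x} where x is the bound variable (index 0) of the body t *)
definition inst :: "trm \<Rightarrow> trm \<Rightarrow> trm" where
  "inst t v = subst 0 v t"

fun closed_at :: "nat \<Rightarrow> trm \<Rightarrow> bool" where
  "closed_at n (Var i) = (i < n)"
| "closed_at n (Lam t) = closed_at (Suc n) t"
| "closed_at n (App t u) = (closed_at n t \<and> closed_at n u)"
| "closed_at n (Shift t) = closed_at (Suc n) t"
| "closed_at n (Reset t) = closed_at n t"

definition closed :: "trm \<Rightarrow> bool" where
  "closed t = closed_at 0 t"

fun is_val :: "trm \<Rightarrow> bool" where
  "is_val (Lam t) = True"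
| "is_val _ = False"

section \<open>Evaluation contexts (F) and pure contexts (E)\<close>

datatype ectx =
    Hole
  | ArgC trm ectx
  | FunC ectx trm
  | ResetC ectx

fun plugF :: "ectx \<Rightarrow> trm \<Rightarrow> trm" where
  "plugF Hole t = t"
| "plugF (ArgC v F) t = App v (plugF F t)"
| "plugF (FunC F u) t = App (plugF F t) u"
| "plugF (ResetC F) t = Reset (plugF F t)"

fun liftF :: "ectx \<Rightarrow> ectx" where
  "liftF Hole = Hole"
| "liftF (ArgC v F) = ArgC (lift 0 v) (liftF F)"
| "liftF (FunC F u) = FunC (liftF F) (lift 0 u)"
| "liftF (ResetC F) = ResetC (liftF F)"

fun evalctx :: "ectx \<Rightarrow> bool" where
  "evalctx Hole = True"
| "evalctx (ArgC v F) = (is_val v \<and> evalctx F)"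
| "evalctx (FunC F u) = evalctx F"
| "evalctx (ResetC F) = evalctx F"

fun pure :: "ectx \<Rightarrow> bool" where
  "pure Hole = True"
| "pure (ArgC v F) = (is_val v \<and> pure F)"
| "pure (FunC F u) = pure F"
| "pure (ResetC F) = False"

fun closedF :: "ectx \<Rightarrow> bool" where
  "closedF Hole = True"
| "closedF (ArgC v F) = (closed v \<and> closedF F)"
| "closedF (FunC F u) = (closedF F \<and> closed u)"
| "closedF (ResetC F) = closedF F"

section \<open>General contexts C\<close>

datatype ctx =
    CHole
  | CLam ctx
  | CAppR trm ctx
  | CAppL ctx trm
  | CShift ctx
  | CReset ctx

(* plugging may capture variables (no renaming) *)
fun plugC :: "ctx \<Rightarrow> trm \<Rightarrow> trm" where
  "plugC CHole t = t"
| "plugC (CLam C) t = Lam (plugC C t)"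
| "plugC (CAppR u C) t = App u (plugC C t)"
| "plugC (CAppL C u) t = App (plugC C t) u"
| "plugC (CShift C) t = Shift (plugC C t)"
| "plugC (CReset C) t = Reset (plugC C t)"

section \<open>Reduction\<close>

inductive step :: "trm \<Rightarrow> trm \<Rightarrow> bool" where
  beta: "\<lbrakk> evalctx F; is_val v \<rbrakk> \<Longrightarrow>
     step (plugF F (App (Lam t) v)) (plugF F (inst t v))"
| shift: "\<lbrakk> evalctx F; pure E \<rbrakk> \<Longrightarrow>
     step (plugF F (Reset (plugF E (Shift t))))
          (plugF F (Reset (inst t (Lam (Reset (plugF (liftF E) (Var 0)))))))"
| reset: "\<lbrakk> evalctx F; is_val v \<rbrakk> \<Longrightarrow>
     step (plugF F (Reset v)) (plugF F v)"

abbreviation steps :: "trm \<Rightarrow> trm \<Rightarrow> bool" where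
  "steps \<equiv> step\<^sup>*\<^sup>*"

definition stuck :: "trm \<Rightarrow> bool" where
  "stuck t \<longleftrightarrow> \<not> is_val t \<and> (\<nexists>u. step t u)"

definition normal_form :: "trm \<Rightarrow> bool" where
  "normal_form t \<longleftrightarrow> is_val t \<or> stuck t"

section \<open>Closures of relations\<close>

inductive tilde_aux :: "trm rel \<Rightarrow> trm \<Rightarrow> trm \<Rightarrow> bool" for R where
  base: "(t0, t1) \<in> R \<Longrightarrow> tilde_aux R t0 t1"
| var: "tilde_aux R (Var i) (Var i)"
| lam: "tilde_aux R t0 t1 \<Longrightarrow> tilde_aux R (Lam t0) (Lam t1)"
| app: "\<lbrakk> tilde_aux R t0 t1; tilde_aux R u0 u1 \<rbrakk> \<Longrightarrow> tilde_aux R (App t0 u0) (App t1 u1)"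
| shift: "tilde_aux R t0 t1 \<Longrightarrow> tilde_aux R (Shift t0) (Shift t1)"
| reset: "tilde_aux R t0 t1 \<Longrightarrow> tilde_aux R (Reset t0) (Reset t1)"

definition tilde :: "trm rel \<Rightarrow> trm \<Rightarrow> trm \<Rightarrow> bool" where
  "tilde R t0 t1 \<longleftrightarrow> tilde_aux R t0 t1 \<and> closed t0 \<and> closed t1"

inductive hat :: "trm rel \<Rightarrow> ectx \<Rightarrow> ectx \<Rightarrow> bool" for R where
  hole: "hat R Hole Hole"
| arg: "\<lbrakk> hat R F0 F1; tilde R v0 v1; is_val v0; is_val v1 \<rbrakk> \<Longrightarrow> hat R (ArgC v0 F0) (ArgC v1 F1)"
| func: "\<lbrakk> hat R F0 F1; tilde R t0 t1 \<rbrakk> \<Longrightarrow> hat R (FunC F0 t0) (FunC F1 t1)"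
| reset: "hat R F0 F1 \<Longrightarrow> hat R (ResetC F0) (ResetC F1)"

section \<open>Environmental bisimilarity\<close>

definition is_env :: "trm rel \<Rightarrow> bool" where
  "is_env \<E> \<longleftrightarrow> (\<forall>(a, b) \<in> \<E>. closed a \<and> closed b \<and>
      ((is_val a \<and> is_val b) \<or> (stuck a \<and> stuck b)))"

type_synonym envrel = "trm rel set \<times> (trm rel \<times> trm \<times> trm) set"

definition is_envrel :: "envrel \<Rightarrow> bool" where
  "is_envrel X \<longleftrightarrow> (\<forall>\<E> \<in> fst X. is_env \<E>) \<and>
     (\<forall>(\<E>, t0, t1) \<in> snd X. is_env \<E> \<and> closed t0 \<and> closed t1)"

definition env_bisim :: "envrel \<Rightarrow> bool" where
  "env_bisim X \<longleftrightarrow> is_envrel X \<and>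
   (\<forall>\<E> t0 t1. (\<E>, t0, t1) \<in> snd X \<longrightarrow>
      (\<forall>t0'. step t0 t0' \<longrightarrow> (\<exists>t1'. steps t1 t1' \<and> (\<E>, t0', t1') \<in> snd X)) \<and>
      (is_val t0 \<longrightarrow> (\<exists>v1. steps t1 v1 \<and> is_val v1 \<and> \<E> \<union> {(t0, v1)} \<in> fst X)) \<and>
      (stuck t0 \<longrightarrow> (\<exists>t1'. steps t1 t1' \<and> stuck t1' \<and> \<E> \<union> {(t0, t1')} \<in> fst X)) \<and>
      (\<forall>t1'. step t1 t1' \<longrightarrow> (\<exists>t0'. steps t0 t0' \<and> (\<E>, t0', t1') \<in> snd X)) \<and>
      (is_val t1 \<longrightarrow> (\<exists>v0. steps t0 v0 \<and> is_val v0 \<and> \<E> \<union> {(v0, t1)} \<in> fst X)) \<and>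
      (stuck t1 \<longrightarrow> (\<exists>t0'. steps t0 t0' \<and> stuck t0' \<and> \<E> \<union> {(t0', t1)} \<in> fst X))) \<and>
   (\<forall>\<E> \<in> fst X.
      (\<forall>b0 b1 v0 v1. (Lam b0, Lam b1) \<in> \<E> \<longrightarrow> is_val v0 \<longrightarrow> is_val v1 \<longrightarrow>
           tilde \<E> v0 v1 \<longrightarrow> (\<E>, inst b0 v0, inst b1 v1) \<in> snd X) \<and>
      (\<forall>E0 E1 s0 s1 E0' E1'. pure E0 \<longrightarrow> pure E1 \<longrightarrow>
           (plugF E0 (Shift s0), plugF E1 (Shift s1)) \<in> \<E> \<longrightarrow>
           pure E0' \<longrightarrow> pure E1' \<longrightarrow> hat \<E> E0' E1' \<longrightarrow>
           (\<E>,
            Reset (inst s0 (Lam (Reset (plugF (liftF E0') (plugF (liftF E0) (Var 0)))))),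
            Reset (inst s1 (Lam (Reset (plugF (liftF E1') (plugF (liftF E1) (Var 0))))))) \<in> snd X))"

(* t0 \<approx>_E t1 : membership in the largest environmental bisimulation (the union of all) *)
definition bisimilar :: "trm rel \<Rightarrow> trm \<Rightarrow> trm \<Rightarrow> bool" where
  "bisimilar \<E> t0 t1 \<longleftrightarrow> (\<exists>X. env_bisim X \<and> (\<E>, t0, t1) \<in> snd X)"

end

theory Submission
  imports Defs
begin


lemma closed_at_mono: "closed_at n t \<Longrightarrow> n \<le> m \<Longrightarrow> closed_at m t"
  by (induction n t arbitrary: m rule: closed_at.induct) auto

lemma lift_closed_at: "closed_at k t \<Longrightarrow> lift k t = t"
  by (induction k t rule: lift.induct) auto

lemma lift_closed: "closed t \<Longrightarrow> lift k t = t"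
  unfolding closed_def by (meson closed_at_mono le0 lift_closed_at)

lemma subst_closed_at: "closed_at k t \<Longrightarrow> subst k s t = t"
  by (induction k s t rule: subst.induct) auto

lemma subst_closed: "closed t \<Longrightarrow> subst k s t = t"
  unfolding closed_def by (meson closed_at_mono le0 subst_closed_at)

lemma closed_at_lift: "closed_at n t \<Longrightarrow> closed_at (Suc n) (lift k t)"
  by (induction k t arbitrary: n rule: lift.induct) auto

lemma closed_at_subst: "closed_at (Suc n) t \<Longrightarrow> k \<le> n \<Longrightarrow> closed_at n s \<Longrightarrow> closed_at n (subst k s t)"
  by (induction k s t arbitrary: n rule: subst.induct) (auto simp: closed_at_lift)

lemma closed_inst: "closed_at (Suc 0) t \<Longrightarrow> closed v \<Longrightarrow> closed (inst t v)"
  unfolding closed_def inst_def by (rule closed_at_subst) auto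

fun compF :: "ectx \<Rightarrow> ectx \<Rightarrow> ectx" where
  "compF Hole G = G"
| "compF (ArgC v F) G = ArgC v (compF F G)"
| "compF (FunC F u) G = FunC (compF F G) u"
| "compF (ResetC F) G = ResetC (compF F G)"

lemma plugF_comp[simp]: "plugF (compF F G) x = plugF F (plugF G x)" by (induction F) auto
lemma evalctx_comp[simp]: "evalctx F \<Longrightarrow> evalctx G \<Longrightarrow> evalctx (compF F G)" by (induction F) auto
lemma pure_comp[simp]: "pure F \<Longrightarrow> pure G \<Longrightarrow> pure (compF F G)" by (induction F) auto
lemma liftF_comp[simp]: "liftF (compF F G) = compF (liftF F) (liftF G)" by (induction F) auto
lemma pure_evalctx: "pure E \<Longrightarrow> evalctx E" by (induction E) auto

lemma step_ctx: "step t t' \<Longrightarrow> evalctx F \<Longrightarrow> step (plugF F t) (plugF F t')"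
proof (induction rule: step.induct)
  case (beta G v t) then show ?case using step.beta[of "compF F G" v t] by simp
next
  case (shift G E t) then show ?case using step.shift[of "compF F G" E t] by simp
next
  case (reset G v) then show ?case using step.reset[of "compF F G" v] by simp
qed

lemma steps_ctx: "steps t t' \<Longrightarrow> evalctx F \<Longrightarrow> steps (plugF F t) (plugF F t')"
  by (induction rule: rtranclp_induct) (auto intro: rtranclp.rtrancl_into_rtrancl step_ctx)

inductive sstep :: "trm \<Rightarrow> trm \<Rightarrow> bool" where
  sbeta: "is_val v \<Longrightarrow> sstep (App (Lam t) v) (inst t v)"
| sshift: "pure E \<Longrightarrow> sstep (Reset (plugF E (Shift t))) (Reset (inst t (Lam (Reset (plugF (liftF E) (Var 0))))))"
| sreset: "is_val v \<Longrightarrow> sstep (Reset v) v"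
| sappL: "sstep t t' \<Longrightarrow> sstep (App t u) (App t' u)"
| sappR: "is_val v \<Longrightarrow> sstep u u' \<Longrightarrow> sstep (App v u) (App v u')"
| sresetC: "sstep t t' \<Longrightarrow> sstep (Reset t) (Reset t')"

lemma sstep_ctx: "sstep r r' \<Longrightarrow> evalctx F \<Longrightarrow> sstep (plugF F r) (plugF F r')"
  by (induction F) (auto intro: sstep.intros)

lemma step_sstep: "step t t' \<Longrightarrow> sstep t t'"
  by (induction rule: step.induct) (auto intro: sstep_ctx sstep.intros)

lemma sstep_step: "sstep t t' \<Longrightarrow> step t t'"
proof (induction rule: sstep.induct)
  case (sbeta v t) then show ?case using step.beta[of Hole v t] by simp
next
  case (sshift E t) then show ?case using step.shift[of Hole E t] by simp
next
  case (sreset v) then show ?case using step.reset[of Hole v] by simp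
next
  case (sappL t t' u) then show ?case using step_ctx[of t t' "FunC Hole u"] by simp
next
  case (sappR v u u') then show ?case using step_ctx[of u u' "ArgC v Hole"] by simp
next
  case (sresetC t t') then show ?case using step_ctx[of t t' "ResetC Hole"] by simp
qed

lemma step_iff: "step t t' \<longleftrightarrow> sstep t t'" using step_sstep sstep_step by blast

lemma val_no_sstep: "is_val v \<Longrightarrow> sstep v t \<Longrightarrow> False"
  by (cases v) (auto elim: sstep.cases)

lemma plugF_shift_not_val: "pure E \<Longrightarrow> \<not> is_val (plugF E (Shift s))" by (cases E) auto
lemma plugF_shift_not_Lam: "pure E \<Longrightarrow> plugF E (Shift s) \<noteq> Lam b" by (cases E) auto
lemma lam_no_sstep: "sstep (Lam b) t \<Longrightarrow> False" by (auto elim: sstep.cases)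

inductive_cases sAppE: "sstep (App t u) x"
inductive_cases sResetE: "sstep (Reset t) x"
inductive_cases sShiftE: "sstep (Shift t) x"

lemma sstep_stuckform: "pure E \<Longrightarrow> sstep (plugF E (Shift s)) t \<Longrightarrow> False"
proof (induction E arbitrary: t)
  case Hole then show ?case by (auto elim: sShiftE)
next
  case (ArgC v E)
  from ArgC.prems(2) show ?case
    apply simp apply (erule sAppE)
    using ArgC plugF_shift_not_Lam plugF_shift_not_val lam_no_sstep val_no_sstep by auto
next
  case (FunC E u)
  from FunC.prems(2) show ?case
    apply simp apply (erule sAppE)
    using FunC plugF_shift_not_Lam plugF_shift_not_val lam_no_sstep val_no_sstep by auto
next
  case (ResetC E) then show ?case by simp
qed

lemma pure_uniq: "pure E \<Longrightarrow> pure E' \<Longrightarrow> plugF E (Shift s) = plugF E' (Shift s') \<Longrightarrow> E = E' \<and> s = s'"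
proof (induction E arbitrary: E')
  case Hole then show ?case by (cases E') auto
next
  case (ArgC v E) then show ?case
    by (cases E') (auto dest: plugF_shift_not_val)
next
  case (FunC E u) then show ?case
    by (cases E') (auto dest: plugF_shift_not_val)
next
  case (ResetC E) then show ?case by simp
qed


lemma sReset_val: "is_val v \<Longrightarrow> sstep (Reset v) b \<Longrightarrow> b = v"
    apply (erule sResetE)
    subgoal by (metis plugF_shift_not_val trm.inject(5))
    subgoal by simp
    subgoal by (metis val_no_sstep trm.inject(5))
    done

lemma sReset_shift: "pure E \<Longrightarrow> sstep (Reset (plugF E (Shift t))) b \<Longrightarrow> b = Reset (inst t (Lam (Reset (plugF (liftF E) (Var 0)))))"
    apply (erule sResetE)
    subgoal by (metis pure_uniq trm.inject(5))
    subgoal by (metis plugF_shift_not_val trm.inject(5))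
    subgoal by (metis sstep_stuckform trm.inject(5))
    done

lemma sReset_cong: "sstep t t' \<Longrightarrow> (\<And>b'. sstep t b' \<Longrightarrow> b' = t') \<Longrightarrow> sstep (Reset t) b \<Longrightarrow> b = Reset t'"
    apply (erule sResetE)
    subgoal by (metis sstep_stuckform trm.inject(5))
    subgoal by (metis val_no_sstep trm.inject(5))
    subgoal by (metis trm.inject(5))
    done

lemma sApp_beta: "is_val v \<Longrightarrow> sstep (App (Lam t) v) b \<Longrightarrow> b = inst t v"
    apply (erule sAppE)
    subgoal by (metis trm.inject(2,3))
    subgoal by (metis lam_no_sstep trm.inject(3))
    subgoal by (metis val_no_sstep trm.inject(3))
    done

lemma sApp_L: "sstep t t' \<Longrightarrow> (\<And>b'. sstep t b' \<Longrightarrow> b' = t') \<Longrightarrow> sstep (App t u) b \<Longrightarrow> b = App t' u"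
    apply (erule sAppE)
    subgoal by (metis lam_no_sstep trm.inject(3))
    subgoal by (metis trm.inject(3))
    subgoal by (metis val_no_sstep trm.inject(3))
    done

lemma sApp_R: "is_val v \<Longrightarrow> sstep u u' \<Longrightarrow> (\<And>b'. sstep u b' \<Longrightarrow> b' = u') \<Longrightarrow> sstep (App v u) b \<Longrightarrow> b = App v u'"
    apply (erule sAppE)
    subgoal by (metis val_no_sstep trm.inject(3))
    subgoal by (metis val_no_sstep trm.inject(3))
    subgoal by (metis trm.inject(3))
    done

lemma sstep_det: "sstep t a \<Longrightarrow> sstep t b \<Longrightarrow> b = a"
proof (induction arbitrary: b rule: sstep.induct)
  case (sbeta v t) then show ?case using sApp_beta by blast
next
  case (sshift E t) then show ?case using sReset_shift by blast
next
  case (sreset v) then show ?case using sReset_val by blast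
next
  case (sappL t t' u) then show ?case using sApp_L by blast
next
  case (sappR v u u') then show ?case using sApp_R by blast
next
  case (sresetC t t') then show ?case using sReset_cong by blast
qed

lemma step_det: "step t a \<Longrightarrow> step t b \<Longrightarrow> a = b"
  using sstep_det step_sstep by metis

lemma progress: "closed_at 0 t \<Longrightarrow> is_val t \<or> (\<exists>t'. sstep t t') \<or> (\<exists>E s. pure E \<and> t = plugF E (Shift s))"
proof (induction t)
  case (Var x) then show ?case by simp
next
  case (Lam t) then show ?case by simp
next
  case (App t u)
  then have ct: "closed_at 0 t" and cu: "closed_at 0 u" by auto
  show ?case
  proof (cases "is_val t")
    case True
    then obtain b where tb: "t = Lam b" by (cases t) auto
    from App.IH(2)[OF cu] show ?thesis
    proof (elim disjE exE conjE)
      assume "is_val u" then show ?thesis using tb by (auto intro: sstep.intros)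
    next
      fix u' assume "sstep u u'" then show ?thesis using True by (auto intro: sstep.intros)
    next
      fix E s assume "pure E" "u = plugF E (Shift s)"
      then show ?thesis using True by (intro disjI2) (rule exI[of _ "ArgC t E"], auto)
    qed
  next
    case False
    from App.IH(1)[OF ct] False show ?thesis
    proof (elim disjE exE conjE)
      fix t' assume "sstep t t'" then show ?thesis by (auto intro: sstep.intros)
    next
      fix E s assume "pure E" "t = plugF E (Shift s)"
      then show ?thesis by (intro disjI2) (rule exI[of _ "FunC E u"], auto)
    qed simp
  qed
next
  case (Shift t) then show ?case by (intro disjI2) (rule exI[of _ Hole], auto)
next
  case (Reset t)
  then have ct: "closed_at 0 t" by auto
  from Reset.IH[OF ct] show ?case by (auto intro: sstep.intros)
qed

lemma stuck_form: "closed t \<Longrightarrow> stuck t \<Longrightarrow> \<exists>E s. pure E \<and> t = plugF E (Shift s)"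
  using progress[of t] unfolding closed_def stuck_def step_iff by blast

lemma val_no_step: "is_val v \<Longrightarrow> \<not> step v t" using val_no_sstep step_sstep by blast
lemma stuck_no_step: "stuck v \<Longrightarrow> \<not> step v t" unfolding stuck_def by blast
lemma stuckform_no_step: "pure E \<Longrightarrow> \<not> step (plugF E (Shift s)) t"
  using sstep_stuckform step_sstep by blast

lemma steps_nostep: "steps t u \<Longrightarrow> (\<And>x. \<not> step t x) \<Longrightarrow> u = t"
  by (erule converse_rtranclpE) auto

lemma closed_at_plugF: "closed_at n (plugF F x) \<Longrightarrow> closed_at n x"
  by (induction F) auto

lemma closed_at_plugF_lift: "closed_at n (plugF E x) \<Longrightarrow> closed_at (Suc n) y \<Longrightarrow> closed_at (Suc n) (plugF (liftF E) y)"
  by (induction E) (auto simp: closed_at_lift)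

lemma sstep_closed: "sstep t t' \<Longrightarrow> closed_at 0 t \<Longrightarrow> closed_at 0 t'"
proof (induction rule: sstep.induct)
  case (sbeta v t) then show ?case by (auto simp: inst_def intro: closed_at_subst)
next
  case (sshift E t)
  then have "closed_at 0 (plugF E (Shift t))" by simp
  then have a: "closed_at 1 t" and b: "closed_at 1 (plugF (liftF E) (Var 0))"
    using closed_at_plugF[of 0 E "Shift t"] closed_at_plugF_lift[of 0 E "Shift t" "Var 0"] by auto
  then show ?case by (auto simp: inst_def intro!: closed_at_subst)
qed auto

lemma step_closed: "step t t' \<Longrightarrow> closed t \<Longrightarrow> closed t'"
  using sstep_closed step_sstep closed_def by blast

lemma steps_closed: "steps t t' \<Longrightarrow> closed t \<Longrightarrow> closed t'"
  by (induction rule: rtranclp_induct) (auto dest: step_closed)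



definition cl_rel :: "trm rel \<Rightarrow> bool" where
  "cl_rel R \<longleftrightarrow> (\<forall>(a,b)\<in>R. closed a \<and> closed b)"

lemma env_cl: "is_env R \<Longrightarrow> cl_rel R"
  unfolding is_env_def cl_rel_def by auto

lemma env_pair: "is_env R \<Longrightarrow> (a,b) \<in> R \<Longrightarrow> closed a \<and> closed b \<and> ((is_val a \<and> is_val b) \<or> (stuck a \<and> stuck b))"
  unfolding is_env_def by auto

lemma env_nostep1: "is_env R \<Longrightarrow> (a,b) \<in> R \<Longrightarrow> \<not> step a x"
  using env_pair val_no_step stuck_no_step by blast
lemma env_nostep2: "is_env R \<Longrightarrow> (a,b) \<in> R \<Longrightarrow> \<not> step b x"
  using env_pair val_no_step stuck_no_step by blast

lemma tilde_aux_refl: "tilde_aux R t t"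
  by (induction t) (auto intro: tilde_aux.intros)

lemma tilde_aux_mono: "tilde_aux R a b \<Longrightarrow> R \<subseteq> S \<Longrightarrow> tilde_aux S a b"
  by (induction rule: tilde_aux.induct) (auto intro: tilde_aux.intros)

definition tset :: "trm rel \<Rightarrow> trm rel" where
  "tset R = {(a,b). tilde R a b}"

lemma tilde_aux_tset: "tilde_aux (tset R) a b \<Longrightarrow> tilde_aux R a b"
  by (induction rule: tilde_aux.induct) (auto intro: tilde_aux.intros simp: tset_def tilde_def)

lemma tilde_aux_conv1: "tilde_aux R a b \<Longrightarrow> tilde_aux (R\<inverse>) b a"
  by (induction rule: tilde_aux.induct) (auto intro: tilde_aux.intros)

lemma tilde_aux_conv: "tilde_aux (R\<inverse>) b a \<longleftrightarrow> tilde_aux R a b"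
  using tilde_aux_conv1[of R a b] tilde_aux_conv1[of "R\<inverse>" b a] by auto

lemma tilde_conv: "tilde (R\<inverse>) b a \<longleftrightarrow> tilde R a b"
  unfolding tilde_def using tilde_aux_conv by blast

lemma tset_conv: "tset (R\<inverse>) = (tset R)\<inverse>"
  unfolding tset_def using tilde_conv by auto

lemma tilde_mono: "tilde R a b \<Longrightarrow> R \<subseteq> S \<Longrightarrow> tilde S a b"
  unfolding tilde_def using tilde_aux_mono by blast

lemma tilde_tset: "tilde (tset R) a b \<Longrightarrow> tilde R a b"
  unfolding tilde_def using tilde_aux_tset by blast

lemma tilde_closed: "tilde R a b \<Longrightarrow> closed a \<and> closed b" unfolding tilde_def by auto

lemma tilde_aux_lift: "tilde_aux R a b \<Longrightarrow> cl_rel R \<Longrightarrow> tilde_aux R (lift k a) (lift k b)"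
proof (induction arbitrary: k rule: tilde_aux.induct)
  case (base t0 t1)
  then have "closed t0" "closed t1" by (auto simp: cl_rel_def)
  then show ?case using base by (simp add: lift_closed tilde_aux.base)
qed (auto intro: tilde_aux.intros)

lemma tilde_aux_subst: "tilde_aux R a b \<Longrightarrow> cl_rel R \<Longrightarrow> tilde_aux R s0 s1 \<Longrightarrow>
   tilde_aux R (subst k s0 a) (subst k s1 b)"
proof (induction arbitrary: k s0 s1 rule: tilde_aux.induct)
  case (base t0 t1)
  then have "closed t0" "closed t1" by (auto simp: cl_rel_def)
  then show ?case using base by (simp add: subst_closed tilde_aux.base)
next
  case (var i) then show ?case by (auto intro: tilde_aux.intros)
next
  case (lam t0 t1 k s0 s1)
  then have "tilde_aux R (lift 0 s0) (lift 0 s1)" by (simp add: tilde_aux_lift)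
  with lam show ?case by (simp add: tilde_aux.lam)
next
  case (shift t0 t1 k s0 s1)
  then have "tilde_aux R (lift 0 s0) (lift 0 s1)" by (simp add: tilde_aux_lift)
  with shift show ?case by (simp add: tilde_aux.shift)
qed (auto intro: tilde_aux.intros)

lemma tilde_aux_inst: "tilde_aux R a b \<Longrightarrow> cl_rel R \<Longrightarrow> tilde_aux R s0 s1 \<Longrightarrow>
   tilde_aux R (inst a s0) (inst b s1)"
  unfolding inst_def by (rule tilde_aux_subst)

lemma hat_plug: "hat R F0 F1 \<Longrightarrow> tilde_aux R x y \<Longrightarrow> tilde_aux R (plugF F0 x) (plugF F1 y)"
  by (induction rule: hat.induct) (auto intro: tilde_aux.intros simp: tilde_def)

lemma hat_plug_lift: "hat R F0 F1 \<Longrightarrow> cl_rel R \<Longrightarrow> tilde_aux R x y \<Longrightarrow>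
   tilde_aux R (plugF (liftF F0) x) (plugF (liftF F1) y)"
  by (induction rule: hat.induct) (auto intro: tilde_aux.intros tilde_aux_lift simp: tilde_def)

lemma hat_evalctx: "hat R F0 F1 \<Longrightarrow> evalctx F0 \<and> evalctx F1"
  by (induction rule: hat.induct) auto

lemma hat_pure: "hat R F0 F1 \<Longrightarrow> pure F0 \<longleftrightarrow> pure F1"
  by (induction rule: hat.induct) auto

lemma hat_mono: "hat R F0 F1 \<Longrightarrow> R \<subseteq> S \<Longrightarrow> hat S F0 F1"
  by (induction rule: hat.induct) (auto intro: hat.intros tilde_mono)

lemma hat_tset: "hat (tset R) F0 F1 \<Longrightarrow> hat R F0 F1"
  by (induction rule: hat.induct) (auto intro: hat.intros tilde_tset)

lemma hat_conv1: "hat R F0 F1 \<Longrightarrow> hat (R\<inverse>) F1 F0"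
  by (induction rule: hat.induct) (auto intro: hat.intros simp: tilde_conv)

lemma hat_conv: "hat (R\<inverse>) F1 F0 \<longleftrightarrow> hat R F0 F1"
  using hat_conv1[of R F0 F1] hat_conv1[of "R\<inverse>" F1 F0] by auto

lemma hat_comp: "hat R F0 F1 \<Longrightarrow> hat R G0 G1 \<Longrightarrow> hat R (compF F0 G0) (compF F1 G1)"
  by (induction rule: hat.induct) (auto intro: hat.intros)

lemma hat_closed: "hat R F0 F1 \<Longrightarrow> closed x \<Longrightarrow> closed (plugF F0 x)"
  by (induction rule: hat.induct) (auto simp: tilde_def closed_def)

lemma hat_closed2: "hat R F0 F1 \<Longrightarrow> closed x \<Longrightarrow> closed (plugF F1 x)"
  by (induction rule: hat.induct) (auto simp: tilde_def closed_def)

lemma val_tilde: "is_env R \<Longrightarrow> tilde_aux R v w \<Longrightarrow> is_val v \<Longrightarrow> is_val w"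
  by (erule tilde_aux.cases) (auto simp: is_env_def stuck_def)

lemma val_tilde2: "is_env R \<Longrightarrow> tilde_aux R v w \<Longrightarrow> is_val w \<Longrightarrow> is_val v"
  by (erule tilde_aux.cases) (auto simp: is_env_def stuck_def)

lemma closed_sub: "closed (App a b) \<longleftrightarrow> closed a \<and> closed b" "closed (Reset a) \<longleftrightarrow> closed a"
  by (auto simp: closed_def)

lemma split_F: "evalctx F \<Longrightarrow> tilde_aux R (plugF F r) t1 \<Longrightarrow> is_env R \<Longrightarrow> closed (plugF F r) \<Longrightarrow>
  closed t1 \<Longrightarrow> step r r' \<Longrightarrow> \<exists>F1 r1. t1 = plugF F1 r1 \<and> hat R F F1 \<and> tilde_aux R r r1 \<and> closed r1"
proof (induction F arbitrary: t1)
  case Hole then show ?case by (intro exI[of _ Hole] exI[of _ t1]) (auto intro: hat.intros)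
next
  case (ArgC v F)
  have st: "step (plugF (ArgC v F) r) (plugF (ArgC v F) r')" using ArgC by (intro step_ctx) auto
  from ArgC.prems(2) show ?case
  proof (cases rule: tilde_aux.cases)
    case base then show ?thesis using env_nostep1 ArgC.prems st by blast
  next
    case (app t0 v1 u0 y)
    then have "v = t0" "u0 = plugF F r" by auto
    with app ArgC.prems obtain F1 r1 where "y = plugF F1 r1" "hat R F F1" "tilde_aux R r r1" "closed r1"
      using ArgC.IH[of y] by (auto simp: closed_sub)
    moreover have "is_val v1" using val_tilde app ArgC.prems \<open>v = t0\<close> by auto
    ultimately show ?thesis using app ArgC.prems \<open>v = t0\<close>
      by (intro exI[of _ "ArgC v1 F1"] exI[of _ r1]) (auto intro!: hat.intros simp: tilde_def closed_sub)
  qed simp_all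
next
  case (FunC F u)
  have st: "step (plugF (FunC F u) r) (plugF (FunC F u) r')" using FunC by (intro step_ctx) auto
  from FunC.prems(2) show ?case
  proof (cases rule: tilde_aux.cases)
    case base then show ?thesis using env_nostep1 FunC.prems st by blast
  next
    case (app t0 y u0 u1)
    then have "u = u0" "t0 = plugF F r" by auto
    with app FunC.prems obtain F1 r1 where "y = plugF F1 r1" "hat R F F1" "tilde_aux R r r1" "closed r1"
      using FunC.IH[of y] by (auto simp: closed_sub)
    then show ?thesis using app FunC.prems \<open>u = u0\<close>
      by (intro exI[of _ "FunC F1 u1"] exI[of _ r1]) (auto intro!: hat.intros simp: tilde_def closed_sub)
  qed simp_all
next
  case (ResetC F)
  have st: "step (plugF (ResetC F) r) (plugF (ResetC F) r')" using ResetC by (intro step_ctx) auto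
  from ResetC.prems(2) show ?case
  proof (cases rule: tilde_aux.cases)
    case base then show ?thesis using env_nostep1[OF ResetC.prems(3)] st by blast
  next
    case (reset t0 y)
    then have e: "t0 = plugF F r" by simp
    have "closed (plugF F r)" "closed y" using ResetC.prems reset by (auto simp: closed_sub)
    then obtain F1 r1 where "y = plugF F1 r1" "hat R F F1" "tilde_aux R r r1" "closed r1"
      using ResetC.IH[of y] ResetC.prems(1,3,6) reset e by auto
    then show ?thesis using reset
      by (intro exI[of _ "ResetC F1"] exI[of _ r1]) (simp add: hat.reset)
  qed simp_all
qed

lemma split_E: "pure E \<Longrightarrow> tilde_aux R (plugF E (Shift s)) y \<Longrightarrow> is_env R \<Longrightarrow> closed y \<Longrightarrow>
  closed (plugF E (Shift s)) \<Longrightarrow>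
  (\<exists>E1 s1. y = plugF E1 (Shift s1) \<and> pure E1 \<and> hat R E E1 \<and> tilde_aux R s s1) \<or>
  (\<exists>G0 G1 E00 E01 s01. E = compF G0 E00 \<and> pure G0 \<and> pure G1 \<and> pure E00 \<and> pure E01 \<and>
     hat R G0 G1 \<and> (plugF E00 (Shift s), plugF E01 (Shift s01)) \<in> R \<and> y = plugF G1 (plugF E01 (Shift s01)))"
proof (induction E arbitrary: y)
  case Hole
  from Hole.prems(2) show ?case
  proof (cases rule: tilde_aux.cases)
    case base
    then have "stuck y" using Hole.prems env_pair[of R "Shift s" y] by auto
    then obtain E01 s01 where "pure E01" "y = plugF E01 (Shift s01)" using stuck_form Hole.prems by blast
    then show ?thesis using base
      by (intro disjI2 exI[of _ Hole] exI[of _ Hole] exI[of _ Hole] exI[of _ E01] exI[of _ s01]) (simp_all add: hat.hole)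
  next
    case (shift t0 t1)
    then show ?thesis by (intro disjI1 exI[of _ Hole]) (auto intro: hat.intros)
  qed simp_all
next
  case (ArgC v E)
  from ArgC.prems(2) show ?case
  proof (cases rule: tilde_aux.cases)
    case base
    then have "stuck y" using ArgC.prems env_pair[of R "App v (plugF E (Shift s))" y] by auto
    then obtain E01 s01 where "pure E01" "y = plugF E01 (Shift s01)" using stuck_form ArgC.prems by blast
    then show ?thesis using base ArgC.prems
      by (intro disjI2 exI[of _ Hole] exI[of _ Hole] exI[of _ "ArgC v E"] exI[of _ E01] exI[of _ s01]) (simp_all add: hat.hole)
  next
    case (app t0 v1 u0 y')
    then have e: "v = t0" "u0 = plugF E (Shift s)" by auto
    have vv1: "is_val v1" using val_tilde app ArgC.prems e by auto
    have vv: "is_val v" using ArgC.prems by simp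
    have tv: "tilde R v v1" using app e ArgC.prems by (auto simp: tilde_def closed_sub)
    from ArgC.IH[of y'] app ArgC.prems e
    have "(\<exists>E1 s1. y' = plugF E1 (Shift s1) \<and> pure E1 \<and> hat R E E1 \<and> tilde_aux R s s1) \<or>
      (\<exists>G0 G1 E00 E01 s01. E = compF G0 E00 \<and> pure G0 \<and> pure G1 \<and> pure E00 \<and> pure E01 \<and>
       hat R G0 G1 \<and> (plugF E00 (Shift s), plugF E01 (Shift s01)) \<in> R \<and> y' = plugF G1 (plugF E01 (Shift s01)))"
      by (auto simp: closed_sub)
    then show ?thesis
    proof (elim disjE exE conjE)
      fix E1 s1 assume "y' = plugF E1 (Shift s1)" "pure E1" "hat R E E1" "tilde_aux R s s1"
      then show ?thesis using app e vv1 tv vv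
        by (intro disjI1 exI[of _ "ArgC v1 E1"] exI[of _ s1]) (simp add: hat.arg)
    next
      fix G0 G1 E00 E01 s01 assume "E = compF G0 E00" "pure G0" "pure G1" "pure E00" "pure E01"
        "hat R G0 G1" "(plugF E00 (Shift s), plugF E01 (Shift s01)) \<in> R" "y' = plugF G1 (plugF E01 (Shift s01))"
      then show ?thesis using app e vv1 tv vv
        by (intro disjI2 exI[of _ "ArgC v G0"] exI[of _ "ArgC v1 G1"] exI[of _ E00] exI[of _ E01] exI[of _ s01]) (simp_all add: hat.arg hat.func)
    qed
  qed simp_all
next
  case (FunC E u)
  from FunC.prems(2) show ?case
  proof (cases rule: tilde_aux.cases)
    case base
    then have "stuck y" using FunC.prems env_pair[of R "App (plugF E (Shift s)) u" y] by auto
    then obtain E01 s01 where "pure E01" "y = plugF E01 (Shift s01)" using stuck_form FunC.prems by blast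
    then show ?thesis using base FunC.prems
      by (intro disjI2 exI[of _ Hole] exI[of _ Hole] exI[of _ "FunC E u"] exI[of _ E01] exI[of _ s01]) (simp_all add: hat.hole)
  next
    case (app t0 y' u0 u1)
    then have e: "u = u0" "t0 = plugF E (Shift s)" by auto
    have tu: "tilde R u u1" using app e FunC.prems by (auto simp: tilde_def closed_sub)
    from FunC.IH[of y'] app FunC.prems e
    have "(\<exists>E1 s1. y' = plugF E1 (Shift s1) \<and> pure E1 \<and> hat R E E1 \<and> tilde_aux R s s1) \<or>
      (\<exists>G0 G1 E00 E01 s01. E = compF G0 E00 \<and> pure G0 \<and> pure G1 \<and> pure E00 \<and> pure E01 \<and>
       hat R G0 G1 \<and> (plugF E00 (Shift s), plugF E01 (Shift s01)) \<in> R \<and> y' = plugF G1 (plugF E01 (Shift s01)))"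
      by (auto simp: closed_sub)
    then show ?thesis
    proof (elim disjE exE conjE)
      fix E1 s1 assume "y' = plugF E1 (Shift s1)" "pure E1" "hat R E E1" "tilde_aux R s s1"
      then show ?thesis using app e tu
        by (intro disjI1 exI[of _ "FunC E1 u1"] exI[of _ s1]) (simp add: hat.func)
    next
      fix G0 G1 E00 E01 s01 assume "E = compF G0 E00" "pure G0" "pure G1" "pure E00" "pure E01"
        "hat R G0 G1" "(plugF E00 (Shift s), plugF E01 (Shift s01)) \<in> R" "y' = plugF G1 (plugF E01 (Shift s01))"
      then show ?thesis using app e tu
        by (intro disjI2 exI[of _ "FunC G0 u"] exI[of _ "FunC G1 u1"] exI[of _ E00] exI[of _ E01] exI[of _ s01]) (simp_all add: hat.arg hat.func)
    qed
  qed simp_all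
next
  case (ResetC E) then show ?case by simp
qed



lemma redex_closed: "closed (plugF F r) \<Longrightarrow> closed r"
  unfolding closed_def by (rule closed_at_plugF)

lemma val_Lam: "is_val v \<Longrightarrow> \<exists>b. v = Lam b" by (cases v) auto

lemma step_core:
  assumes env: "is_env R" and tl: "tilde_aux R t0 t1" and c0: "closed t0" and c1: "closed t1"
    and st: "step t0 t0'"
  shows "(\<exists>t1'. step t1 t1' \<and> tilde_aux R t0' t1') \<or>
  (\<exists>F0 F1 b0 b1 v0 v1. hat R F0 F1 \<and> (Lam b0, Lam b1) \<in> R \<and> is_val v0 \<and> is_val v1 \<and> tilde R v0 v1 \<and>
      t0' = plugF F0 (inst b0 v0) \<and> step t1 (plugF F1 (inst b1 v1))) \<or>
  (\<exists>F0 F1 G0 G1 E00 E01 s00 s01. hat R F0 F1 \<and> pure G0 \<and> pure G1 \<and> hat R G0 G1 \<and> pure E00 \<and> pure E01 \<and>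
      (plugF E00 (Shift s00), plugF E01 (Shift s01)) \<in> R \<and>
      t0' = plugF F0 (Reset (inst s00 (Lam (Reset (plugF (liftF G0) (plugF (liftF E00) (Var 0))))))) \<and>
      step t1 (plugF F1 (Reset (inst s01 (Lam (Reset (plugF (liftF G1) (plugF (liftF E01) (Var 0)))))))))"
  using st
proof cases
  case (beta F v t)
  have rs: "step (App (Lam t) v) (inst t v)" using step.beta[of Hole v t] beta by simp
  have cr: "closed (App (Lam t) v)" using c0 beta redex_closed by blast
  obtain F1 r1 where t1: "t1 = plugF F1 r1" and h: "hat R F F1" and tr: "tilde_aux R (App (Lam t) v) r1"
      and cr1: "closed r1"
    using split_F[OF beta(3) _ env _ c1 rs] tl c0 beta by auto
  have ev1: "evalctx F1" using hat_evalctx[OF h] by simp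
  from tr show ?thesis
  proof (cases rule: tilde_aux.cases)
    case base then show ?thesis using env_nostep1[OF env] rs by blast
  next
    case (app a1 w1)
    have vw: "is_val w1" using val_tilde[OF env] app beta by auto
    have tvw: "tilde R v w1" using app cr cr1 by (auto simp: tilde_def closed_sub)
    from app(2) show ?thesis
    proof (cases rule: tilde_aux.cases)
      case base
      then have "is_val a1" using env_pair[OF env base] by (auto simp: stuck_def)
      then obtain b1 where a1: "a1 = Lam b1" using val_Lam by blast
      have "step t1 (plugF F1 (inst b1 w1))"
        using step.beta[OF ev1 vw, of b1] t1 app a1 by simp
      then show ?thesis using h base a1 beta vw tvw
        by (intro disjI2 disjI1 exI[of _ F] exI[of _ F1] exI[of _ t] exI[of _ b1] exI[of _ v] exI[of _ w1]) simp
    next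
      case (lam b1)
      have "step t1 (plugF F1 (inst b1 w1))"
        using step.beta[OF ev1 vw, of b1] t1 app lam by simp
      moreover have "tilde_aux R t0' (plugF F1 (inst b1 w1))"
        using beta hat_plug[OF h tilde_aux_inst[OF _ env_cl[OF env] app(3)]] lam by simp
      ultimately show ?thesis by blast
    qed
  qed
next
  case (shift F E t)
  have rs: "step (Reset (plugF E (Shift t))) (Reset (inst t (Lam (Reset (plugF (liftF E) (Var 0))))))"
    using step.shift[of Hole E t] shift by simp
  have cr: "closed (Reset (plugF E (Shift t)))" using c0 shift redex_closed by blast
  obtain F1 r1 where t1: "t1 = plugF F1 r1" and h: "hat R F F1" and tr: "tilde_aux R (Reset (plugF E (Shift t))) r1"
      and cr1: "closed r1"
    using split_F[OF shift(3) _ env _ c1 rs] tl c0 shift by auto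
  have ev1: "evalctx F1" using hat_evalctx[OF h] by simp
  from tr show ?thesis
  proof (cases rule: tilde_aux.cases)
    case base then show ?thesis using env_nostep1[OF env] rs by blast
  next
    case (reset y)
    have cy: "closed y" "closed (plugF E (Shift t))" using cr cr1 reset by (auto simp: closed_sub)
    from split_E[OF shift(4) reset(2) env cy(1) cy(2)] show ?thesis
    proof (elim disjE exE conjE)
      fix E1 s1 assume y: "y = plugF E1 (Shift s1)" and pE1: "pure E1" and hE: "hat R E E1"
        and ts: "tilde_aux R t s1"
      have "step t1 (plugF F1 (Reset (inst s1 (Lam (Reset (plugF (liftF E1) (Var 0)))))))"
        using step.shift[OF ev1 pE1, of s1] t1 reset y by simp
      moreover have "tilde_aux R t0' (plugF F1 (Reset (inst s1 (Lam (Reset (plugF (liftF E1) (Var 0)))))))"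
      proof -
        have "tilde_aux R (plugF (liftF E) (Var 0)) (plugF (liftF E1) (Var 0))"
          using hat_plug_lift[OF hE env_cl[OF env]] tilde_aux.var by blast
        then have "tilde_aux R (Lam (Reset (plugF (liftF E) (Var 0)))) (Lam (Reset (plugF (liftF E1) (Var 0))))"
          by (intro tilde_aux.lam tilde_aux.reset)
        then have "tilde_aux R (inst t (Lam (Reset (plugF (liftF E) (Var 0))))) (inst s1 (Lam (Reset (plugF (liftF E1) (Var 0)))))"
          using tilde_aux_inst[OF ts env_cl[OF env]] by blast
        then show ?thesis using shift hat_plug[OF h] tilde_aux.reset by simp
      qed
      ultimately show ?thesis by blast
    next
      fix G0 G1 E00 E01 s01 assume "E = compF G0 E00" "pure G0" "pure G1" "pure E00" "pure E01"
        "hat R G0 G1" "(plugF E00 (Shift t), plugF E01 (Shift s01)) \<in> R" "y = plugF G1 (plugF E01 (Shift s01))"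
      moreover have "step t1 (plugF F1 (Reset (inst s01 (Lam (Reset (plugF (liftF (compF G1 E01)) (Var 0)))))))"
        using step.shift[OF ev1 pure_comp[OF \<open>pure G1\<close> \<open>pure E01\<close>], of s01] t1 reset calculation by simp
      ultimately show ?thesis using h shift
        by (intro disjI2 exI[of _ F] exI[of _ F1] exI[of _ G0] exI[of _ G1] exI[of _ E00] exI[of _ E01] exI[of _ t] exI[of _ s01]) simp
    qed
  qed
next
  case (reset F v)
  have rs: "step (Reset v) v" using step.reset[of Hole v] reset by simp
  have cr: "closed (Reset v)" using c0 reset redex_closed by blast
  obtain F1 r1 where t1: "t1 = plugF F1 r1" and h: "hat R F F1" and tr: "tilde_aux R (Reset v) r1"
      and cr1: "closed r1"
    using split_F[OF reset(3) _ env _ c1 rs] tl c0 reset by auto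
  have ev1: "evalctx F1" using hat_evalctx[OF h] by simp
  from tr show ?thesis
  proof (cases rule: tilde_aux.cases)
    case base then show ?thesis using env_nostep1[OF env] rs by blast
  next
    case (reset w)
    have vw: "is_val w" using val_tilde[OF env] reset \<open>is_val v\<close> by auto
    have "step t1 (plugF F1 w)" using step.reset[OF ev1 vw] t1 reset by simp
    moreover have "tilde_aux R t0' (plugF F1 w)" using \<open>t0' = plugF F v\<close> hat_plug[OF h] reset by simp
    ultimately show ?thesis by blast
  qed
qed

lemma step_exists: "is_env R \<Longrightarrow> tilde_aux R t0 t1 \<Longrightarrow> closed t0 \<Longrightarrow> closed t1 \<Longrightarrow> step t0 t0' \<Longrightarrow> \<exists>t1'. step t1 t1'"
  using step_core by blast

lemma step_exists_back: "is_env R \<Longrightarrow> tilde_aux R t0 t1 \<Longrightarrow> closed t0 \<Longrightarrow> closed t1 \<Longrightarrow> step t1 t1' \<Longrightarrow> \<exists>t0'. step t0 t0'"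
proof -
  assume a: "is_env R" "tilde_aux R t0 t1" "closed t0" "closed t1" "step t1 t1'"
  have "is_env (R\<inverse>)" using a(1) unfolding is_env_def by auto
  moreover have "tilde_aux (R\<inverse>) t1 t0" using a(2) tilde_aux_conv by blast
  ultimately show ?thesis using step_exists a by blast
qed



lemma bis_envrel: "env_bisim X \<Longrightarrow> is_envrel X"
  unfolding env_bisim_def by (elim conjE)

lemma bis_env: "env_bisim X \<Longrightarrow> E \<in> fst X \<Longrightarrow> is_env E"
  using bis_envrel unfolding is_envrel_def by blast
lemma bis_tri: "env_bisim X \<Longrightarrow> (E,a,b) \<in> snd X \<Longrightarrow> is_env E \<and> closed a \<and> closed b"
  using bis_envrel unfolding is_envrel_def by fast

lemma bis_tri_all: "env_bisim X \<Longrightarrow> (E,t0,t1) \<in> snd X \<Longrightarrow>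
      (\<forall>t0'. step t0 t0' \<longrightarrow> (\<exists>t1'. steps t1 t1' \<and> (E, t0', t1') \<in> snd X)) \<and>
      (is_val t0 \<longrightarrow> (\<exists>v1. steps t1 v1 \<and> is_val v1 \<and> E \<union> {(t0, v1)} \<in> fst X)) \<and>
      (stuck t0 \<longrightarrow> (\<exists>t1'. steps t1 t1' \<and> stuck t1' \<and> E \<union> {(t0, t1')} \<in> fst X)) \<and>
      (\<forall>t1'. step t1 t1' \<longrightarrow> (\<exists>t0'. steps t0 t0' \<and> (E, t0', t1') \<in> snd X)) \<and>
      (is_val t1 \<longrightarrow> (\<exists>v0. steps t0 v0 \<and> is_val v0 \<and> E \<union> {(v0, t1)} \<in> fst X)) \<and>
      (stuck t1 \<longrightarrow> (\<exists>t0'. steps t0 t0' \<and> stuck t0' \<and> E \<union> {(t0', t1)} \<in> fst X))"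
  unfolding env_bisim_def
  apply (elim conjE)
  apply (drule spec, drule spec, drule spec, drule mp, assumption)
  apply assumption
  done

lemma bis_env_all: "env_bisim X \<Longrightarrow> E \<in> fst X \<Longrightarrow>
      (\<forall>b0 b1 v0 v1. (Lam b0, Lam b1) \<in> E \<longrightarrow> is_val v0 \<longrightarrow> is_val v1 \<longrightarrow>
           tilde E v0 v1 \<longrightarrow> (E, inst b0 v0, inst b1 v1) \<in> snd X) \<and>
      (\<forall>E0 E1 s0 s1 E0' E1'. pure E0 \<longrightarrow> pure E1 \<longrightarrow>
           (plugF E0 (Shift s0), plugF E1 (Shift s1)) \<in> E \<longrightarrow>
           pure E0' \<longrightarrow> pure E1' \<longrightarrow> hat E E0' E1' \<longrightarrow>
           (E,
            Reset (inst s0 (Lam (Reset (plugF (liftF E0') (plugF (liftF E0) (Var 0)))))),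
            Reset (inst s1 (Lam (Reset (plugF (liftF E1') (plugF (liftF E1) (Var 0))))))) \<in> snd X)"
  unfolding env_bisim_def
  apply (elim conjE)
  apply (drule bspec, assumption)
  apply assumption
  done

lemma bis_step: "env_bisim X \<Longrightarrow> (E,t0,t1) \<in> snd X \<Longrightarrow> step t0 t0' \<Longrightarrow> \<exists>t1'. steps t1 t1' \<and> (E,t0',t1') \<in> snd X"
  using bis_tri_all by blast
lemma bis_val: "env_bisim X \<Longrightarrow> (E,t0,t1) \<in> snd X \<Longrightarrow> is_val t0 \<Longrightarrow> \<exists>v1. steps t1 v1 \<and> is_val v1 \<and> E \<union> {(t0,v1)} \<in> fst X"
  using bis_tri_all by blast
lemma bis_stuck: "env_bisim X \<Longrightarrow> (E,t0,t1) \<in> snd X \<Longrightarrow> stuck t0 \<Longrightarrow> \<exists>t1'. steps t1 t1' \<and> stuck t1' \<and> E \<union> {(t0,t1')} \<in> fst X"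
  using bis_tri_all by blast
lemma bis_2a: "env_bisim X \<Longrightarrow> E \<in> fst X \<Longrightarrow> (Lam b0, Lam b1) \<in> E \<Longrightarrow> is_val v0 \<Longrightarrow> is_val v1 \<Longrightarrow>
   tilde E v0 v1 \<Longrightarrow> (E, inst b0 v0, inst b1 v1) \<in> snd X"
  using bis_env_all by blast
lemma bis_2b: "env_bisim X \<Longrightarrow> E \<in> fst X \<Longrightarrow> pure E0 \<Longrightarrow> pure E1 \<Longrightarrow>
   (plugF E0 (Shift s0), plugF E1 (Shift s1)) \<in> E \<Longrightarrow> pure E0' \<Longrightarrow> pure E1' \<Longrightarrow> hat E E0' E1' \<Longrightarrow>
   (E, Reset (inst s0 (Lam (Reset (plugF (liftF E0') (plugF (liftF E0) (Var 0)))))),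
       Reset (inst s1 (Lam (Reset (plugF (liftF E1') (plugF (liftF E1) (Var 0))))))) \<in> snd X"
  using bis_env_all by blast

definition Yenv :: "envrel \<Rightarrow> trm rel set" where
  "Yenv X = {E. is_env E \<and> (\<exists>R\<in>fst X. E \<subseteq> tset R)}"

definition Ytri :: "envrel \<Rightarrow> (trm rel \<times> trm \<times> trm) set" where
  "Ytri X = {(E,t0,t1). is_env E \<and> closed t0 \<and> closed t1 \<and> (\<exists>R\<in>fst X. E \<subseteq> tset R \<and>
     (tilde_aux R t0 t1 \<or> (\<exists>F0 F1 u0 u1. hat R F0 F1 \<and> t0 = plugF F0 u0 \<and> t1 = plugF F1 u1 \<and> (R,u0,u1) \<in> snd X)))}"

lemma tset_mono: "R \<subseteq> S \<Longrightarrow> tset R \<subseteq> tset S"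
  unfolding tset_def using tilde_mono by blast

lemma env_ext: "is_env E \<Longrightarrow> closed a \<Longrightarrow> closed b \<Longrightarrow> (is_val a \<and> is_val b) \<or> (stuck a \<and> stuck b) \<Longrightarrow>
  is_env (E \<union> {(a,b)})"
  unfolding is_env_def by auto

lemma tilde_case:
  assumes X: "env_bisim X" and R: "R \<in> fst X" and E: "is_env E" "E \<subseteq> tset R"
    and tl: "tilde_aux R t0 t1" and c0: "closed t0" and c1: "closed t1"
  shows "(\<forall>t0'. step t0 t0' \<longrightarrow> (\<exists>t1'. step t1 t1' \<and> (E,t0',t1') \<in> Ytri X)) \<and>
         (is_val t0 \<longrightarrow> is_val t1 \<and> E \<union> {(t0,t1)} \<in> Yenv X) \<and>
         (stuck t0 \<longrightarrow> stuck t1 \<and> E \<union> {(t0,t1)} \<in> Yenv X)"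
proof (intro conjI allI impI)
  have env: "is_env R" using bis_env[OF X R] .
  fix t0' assume st: "step t0 t0'"
  have c0': "closed t0'" using step_closed[OF st c0] .
  from step_core[OF env tl c0 c1 st] show "\<exists>t1'. step t1 t1' \<and> (E,t0',t1') \<in> Ytri X"
  proof (elim disjE exE conjE)
    fix t1' assume "step t1 t1'" "tilde_aux R t0' t1'"
    then show ?thesis using c0' step_closed[OF _ c1] E R by (auto simp: Ytri_def)
  next
    fix F0 F1 b0 b1 v0 v1 assume h: "hat R F0 F1" "(Lam b0, Lam b1) \<in> R" "is_val v0" "is_val v1" "tilde R v0 v1"
      "t0' = plugF F0 (inst b0 v0)" "step t1 (plugF F1 (inst b1 v1))"
    have "(R, inst b0 v0, inst b1 v1) \<in> snd X" using bis_2a[OF X R h(2-5)] .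
    then show ?thesis using h c0' step_closed[OF h(7) c1] E R
      by (intro exI[of _ "plugF F1 (inst b1 v1)"]) (auto simp: Ytri_def)
  next
    fix F0 F1 G0 G1 E00 E01 s00 s01
    assume h: "hat R F0 F1" "pure G0" "pure G1" "hat R G0 G1" "pure E00" "pure E01"
      "(plugF E00 (Shift s00), plugF E01 (Shift s01)) \<in> R"
      "t0' = plugF F0 (Reset (inst s00 (Lam (Reset (plugF (liftF G0) (plugF (liftF E00) (Var 0)))))))"
      "step t1 (plugF F1 (Reset (inst s01 (Lam (Reset (plugF (liftF G1) (plugF (liftF E01) (Var 0))))))))"
    have "(R, Reset (inst s00 (Lam (Reset (plugF (liftF G0) (plugF (liftF E00) (Var 0)))))),
       Reset (inst s01 (Lam (Reset (plugF (liftF G1) (plugF (liftF E01) (Var 0))))))) \<in> snd X"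
      using bis_2b[OF X R h(5,6,7,2,3,4)] .
    then show ?thesis using h c0' step_closed[OF h(9) c1] E R
      by (intro exI[of _ "plugF F1 (Reset (inst s01 (Lam (Reset (plugF (liftF G1) (plugF (liftF E01) (Var 0)))))))"])
         (auto simp: Ytri_def)
  qed
next
  have env: "is_env R" using bis_env[OF X R] .
  assume v: "is_val t0"
  show vt: "is_val t1" using val_tilde[OF env tl v] .
  have "tilde R t0 t1" using tl c0 c1 by (simp add: tilde_def)
  then show "E \<union> {(t0,t1)} \<in> Yenv X" using env_ext[OF E(1) c0 c1] v vt E R
    by (auto simp: Yenv_def tset_def)
next
  have env: "is_env R" using bis_env[OF X R] .
  assume s: "stuck t0"
  have nv: "\<not> is_val t1" using val_tilde2[OF env tl] s by (auto simp: stuck_def)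
  have ns: "\<nexists>x. step t1 x" using step_exists_back[OF env tl c0 c1] s by (auto simp: stuck_def)
  show st: "stuck t1" using nv ns by (simp add: stuck_def)
  have "tilde R t0 t1" using tl c0 c1 by (simp add: tilde_def)
  then show "E \<union> {(t0,t1)} \<in> Yenv X" using env_ext[OF E(1) c0 c1] s st E R
    by (auto simp: Yenv_def tset_def)
qed

lemma normalize:
  assumes X: "env_bisim X" and tr: "(R,u0,u1) \<in> snd X" and ns: "\<nexists>x. step u0 x" and h: "hat R F0 F1"
  shows "\<exists>R'\<in>fst X. R \<subseteq> R' \<and> (\<exists>u1'. steps u1 u1' \<and> tilde_aux R' (plugF F0 u0) (plugF F1 u1'))"
proof -
  have cu: "closed u0" using bis_tri[OF X tr] by simp
  have "is_val u0 \<or> stuck u0"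
    using progress[of u0] cu ns step_iff by (auto simp: closed_def stuck_def)
  then obtain u1' where "steps u1 u1'" "R \<union> {(u0,u1')} \<in> fst X"
    using bis_val[OF X tr] bis_stuck[OF X tr] by blast
  moreover have "tilde_aux (R \<union> {(u0,u1')}) (plugF F0 u0) (plugF F1 u1')"
  proof -
    have m: "hat (R \<union> {(u0,u1')}) F0 F1" using hat_mono[OF h] by blast
    show ?thesis using hat_plug[OF m tilde_aux.base[of u0 u1' "R \<union> {(u0,u1')}"]] by simp
  qed
  ultimately show ?thesis by blast
qed

lemma Y_fwd:
  assumes X: "env_bisim X" and T: "(E,t0,t1) \<in> Ytri X"
  shows "(\<forall>t0'. step t0 t0' \<longrightarrow> (\<exists>t1'. steps t1 t1' \<and> (E,t0',t1') \<in> Ytri X)) \<and>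
         (is_val t0 \<longrightarrow> (\<exists>v1. steps t1 v1 \<and> is_val v1 \<and> E \<union> {(t0,v1)} \<in> Yenv X)) \<and>
         (stuck t0 \<longrightarrow> (\<exists>t1'. steps t1 t1' \<and> stuck t1' \<and> E \<union> {(t0,t1')} \<in> Yenv X))" (is ?G)
proof -
  from T obtain R where E: "is_env E" and c0: "closed t0" and c1: "closed t1" and R: "R \<in> fst X"
    and ER: "E \<subseteq> tset R" and D: "tilde_aux R t0 t1 \<or> (\<exists>F0 F1 u0 u1. hat R F0 F1 \<and> t0 = plugF F0 u0 \<and> t1 = plugF F1 u1 \<and> (R,u0,u1) \<in> snd X)"
    unfolding Ytri_def by blast
  have gen: "\<And>R' t1''. R' \<in> fst X \<Longrightarrow> E \<subseteq> tset R' \<Longrightarrow> steps t1 t1'' \<Longrightarrow> tilde_aux R' t0 t1'' \<Longrightarrow> ?G"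
  proof -
    fix R' t1'' assume R': "R' \<in> fst X" "E \<subseteq> tset R'" and ss: "steps t1 t1''" and tl: "tilde_aux R' t0 t1''"
    have c1'': "closed t1''" using steps_closed[OF ss c1] .
    note tc = tilde_case[OF X R'(1) E R'(2) tl c0 c1'']
    show ?G
    proof (intro conjI allI impI)
      fix t0' assume "step t0 t0'"
      then obtain t1' where "step t1'' t1'" "(E,t0',t1') \<in> Ytri X" using tc by blast
      then show "\<exists>t1'. steps t1 t1' \<and> (E,t0',t1') \<in> Ytri X" using ss by (meson rtranclp.rtrancl_into_rtrancl)
    next
      assume "is_val t0" then show "\<exists>v1. steps t1 v1 \<and> is_val v1 \<and> E \<union> {(t0,v1)} \<in> Yenv X" using tc ss by blast
    next
      assume "stuck t0" then show "\<exists>t1'. steps t1 t1' \<and> stuck t1' \<and> E \<union> {(t0,t1')} \<in> Yenv X" using tc ss by blast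
    qed
  qed
  from D show ?thesis
  proof (elim disjE exE conjE)
    assume "tilde_aux R t0 t1" then show ?thesis using gen[OF R ER] by blast
  next
    fix F0 F1 u0 u1 assume h: "hat R F0 F1" and e0: "t0 = plugF F0 u0" and e1: "t1 = plugF F1 u1"
      and tr: "(R,u0,u1) \<in> snd X"
    have ev: "evalctx F0" "evalctx F1" using hat_evalctx[OF h] by auto
    show ?thesis
    proof (cases "\<exists>x. step u0 x")
      case True
      then obtain u0' where su: "step u0 u0'" by blast
      have st0: "step t0 (plugF F0 u0')" using step_ctx[OF su ev(1)] e0 by simp
      show ?thesis
      proof (intro conjI allI impI)
        fix t0' assume "step t0 t0'"
        then have t0': "t0' = plugF F0 u0'" using st0 step_det by blast
        obtain u1' where ss: "steps u1 u1'" and tr': "(R,u0',u1') \<in> snd X" using bis_step[OF X tr su] by blast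
        have "steps t1 (plugF F1 u1')" using steps_ctx[OF ss ev(2)] e1 by simp
        moreover have "(E, t0', plugF F1 u1') \<in> Ytri X"
          using t0' h tr' E R ER step_closed[OF st0 c0] steps_closed[OF calculation c1]
          unfolding Ytri_def by blast
        ultimately show "\<exists>t1'. steps t1 t1' \<and> (E,t0',t1') \<in> Ytri X" by blast
      next
        assume "is_val t0" then show "\<exists>v1. steps t1 v1 \<and> is_val v1 \<and> E \<union> {(t0,v1)} \<in> Yenv X"
          using st0 val_no_step by blast
      next
        assume "stuck t0" then show "\<exists>t1'. steps t1 t1' \<and> stuck t1' \<and> E \<union> {(t0,t1')} \<in> Yenv X"
          using st0 stuck_no_step by blast
      qed
    next
      case False
      then obtain R' u1' where R': "R' \<in> fst X" "R \<subseteq> R'" and ss: "steps u1 u1'"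
        and tl: "tilde_aux R' (plugF F0 u0) (plugF F1 u1')"
        using normalize[OF X tr _ h] by blast
      have "steps t1 (plugF F1 u1')" using steps_ctx[OF ss ev(2)] e1 by simp
      moreover have "E \<subseteq> tset R'" using ER tset_mono[OF R'(2)] by blast
      ultimately show ?thesis using gen[OF R'(1)] tl e0 by blast
    qed
  qed
qed



lemma Y_2a:
  assumes X: "env_bisim X" and E: "E \<in> Yenv X" and p: "(Lam b0, Lam b1) \<in> E"
    and v: "is_val v0" "is_val v1" and tv: "tilde E v0 v1"
  shows "(E, inst b0 v0, inst b1 v1) \<in> Ytri X"
proof -
  obtain R where R: "R \<in> fst X" and ER: "E \<subseteq> tset R" and envE: "is_env E" using E unfolding Yenv_def by blast
  have env: "is_env R" using bis_env[OF X R] .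
  have tl: "tilde R (Lam b0) (Lam b1)" using ER p unfolding tset_def by blast
  have tvR: "tilde R v0 v1" using tilde_tset[OF tilde_mono[OF tv ER]] .
  have c: "closed (inst b0 v0)" "closed (inst b1 v1)"
    using tl tvR by (auto simp: tilde_def closed_def intro!: closed_inst[unfolded closed_def])
  from tl[unfolded tilde_def] have "tilde_aux R (Lam b0) (Lam b1)" by simp
  then show ?thesis
  proof (cases rule: tilde_aux.cases)
    case base
    have "(R, inst b0 v0, inst b1 v1) \<in> snd X" using bis_2a[OF X R base v tvR] .
    then show ?thesis using c envE R ER unfolding Ytri_def
      by (auto intro!: exI[of _ Hole] hat.hole)
  next
    case lam
    have "tilde_aux R (inst b0 v0) (inst b1 v1)"
      using tilde_aux_inst[OF lam env_cl[OF env]] tvR by (simp add: tilde_def)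
    then show ?thesis using c envE R ER unfolding Ytri_def by blast
  qed
qed

lemma Y_2b:
  assumes X: "env_bisim X" and E: "E \<in> Yenv X" and pE: "pure E0" "pure E1"
    and p: "(plugF E0 (Shift s0), plugF E1 (Shift s1)) \<in> E"
    and pE': "pure E0'" "pure E1'" and hE: "hat E E0' E1'"
  shows "(E, Reset (inst s0 (Lam (Reset (plugF (liftF E0') (plugF (liftF E0) (Var 0)))))),
       Reset (inst s1 (Lam (Reset (plugF (liftF E1') (plugF (liftF E1) (Var 0))))))) \<in> Ytri X"
proof -
  obtain R where R: "R \<in> fst X" and ER: "E \<subseteq> tset R" and envE: "is_env E" using E unfolding Yenv_def by blast
  have env: "is_env R" using bis_env[OF X R] .
  have tl: "tilde R (plugF E0 (Shift s0)) (plugF E1 (Shift s1))" using ER p unfolding tset_def by blast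
  have hR: "hat R E0' E1'" using hat_tset[OF hat_mono[OF hE ER]] .
  have cl: "closed (plugF E0 (Shift s0))" "closed (plugF E1 (Shift s1))" using tl by (auto simp: tilde_def)
  have st0: "step (Reset (plugF (compF E0' E0) (Shift s0)))
     (Reset (inst s0 (Lam (Reset (plugF (liftF E0') (plugF (liftF E0) (Var 0)))))))"
    using step.shift[of Hole "compF E0' E0" s0] pE pE' by simp
  have st1: "step (Reset (plugF (compF E1' E1) (Shift s1)))
     (Reset (inst s1 (Lam (Reset (plugF (liftF E1') (plugF (liftF E1) (Var 0)))))))"
    using step.shift[of Hole "compF E1' E1" s1] pE pE' by simp
  have c: "closed (Reset (inst s0 (Lam (Reset (plugF (liftF E0') (plugF (liftF E0) (Var 0)))))))"
     "closed (Reset (inst s1 (Lam (Reset (plugF (liftF E1') (plugF (liftF E1) (Var 0)))))))"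
    using step_closed[OF st0] step_closed[OF st1] hat_closed[OF hR cl(1)] hat_closed2[OF hR cl(2)]
    by (auto simp: closed_sub)
  from split_E[OF pE(1) _ env cl(2) cl(1)] tl
  have "(\<exists>E1'' s1''. plugF E1 (Shift s1) = plugF E1'' (Shift s1'') \<and> pure E1'' \<and> hat R E0 E1'' \<and> tilde_aux R s0 s1'') \<or>
  (\<exists>G0 G1 E00 E01 s01. E0 = compF G0 E00 \<and> pure G0 \<and> pure G1 \<and> pure E00 \<and> pure E01 \<and>
     hat R G0 G1 \<and> (plugF E00 (Shift s0), plugF E01 (Shift s01)) \<in> R \<and> plugF E1 (Shift s1) = plugF G1 (plugF E01 (Shift s01)))"
    by (simp add: tilde_def)
  then show ?thesis
  proof (elim disjE exE conjE)
    fix E1'' s1'' assume eq: "plugF E1 (Shift s1) = plugF E1'' (Shift s1'')" and p1: "pure E1''"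
      and h: "hat R E0 E1''" and ts: "tilde_aux R s0 s1''"
    from pure_uniq[OF pE(2) p1 eq] have e: "E1'' = E1" "s1'' = s1" by auto
    have hc: "hat R (compF E0' E0) (compF E1' E1)" using hat_comp[OF hR] h e by simp
    have "tilde_aux R (plugF (liftF (compF E0' E0)) (Var 0)) (plugF (liftF (compF E1' E1)) (Var 0))"
      using hat_plug_lift[OF hc env_cl[OF env]] tilde_aux.var by blast
    then have "tilde_aux R (Lam (Reset (plugF (liftF E0') (plugF (liftF E0) (Var 0)))))
                           (Lam (Reset (plugF (liftF E1') (plugF (liftF E1) (Var 0)))))"
      by (simp add: tilde_aux.lam tilde_aux.reset)
    then have "tilde_aux R (Reset (inst s0 (Lam (Reset (plugF (liftF E0') (plugF (liftF E0) (Var 0)))))))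
       (Reset (inst s1 (Lam (Reset (plugF (liftF E1') (plugF (liftF E1) (Var 0)))))))"
      using tilde_aux_inst[OF ts env_cl[OF env]] e tilde_aux.reset by simp
    then show ?thesis using c envE R ER unfolding Ytri_def by blast
  next
    fix G0 G1 E00 E01 s01 assume e0: "E0 = compF G0 E00" and pp: "pure G0" "pure G1" "pure E00" "pure E01"
      and hG: "hat R G0 G1" and pr: "(plugF E00 (Shift s0), plugF E01 (Shift s01)) \<in> R"
      and eq: "plugF E1 (Shift s1) = plugF G1 (plugF E01 (Shift s01))"
    have "E1 = compF G1 E01 \<and> s1 = s01" using pure_uniq[OF pE(2) pure_comp[OF pp(2,4)]] eq by simp
    then have e1: "E1 = compF G1 E01" "s1 = s01" by auto
    have "(R, Reset (inst s0 (Lam (Reset (plugF (liftF (compF E0' G0)) (plugF (liftF E00) (Var 0)))))),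
       Reset (inst s01 (Lam (Reset (plugF (liftF (compF E1' G1)) (plugF (liftF E01) (Var 0))))))) \<in> snd X"
      using bis_2b[OF X R pp(3,4) pr pure_comp[OF pE'(1) pp(1)] pure_comp[OF pE'(2) pp(2)] hat_comp[OF hR hG]] .
    then have "(R, Reset (inst s0 (Lam (Reset (plugF (liftF E0') (plugF (liftF E0) (Var 0)))))),
       Reset (inst s1 (Lam (Reset (plugF (liftF E1') (plugF (liftF E1) (Var 0))))))) \<in> snd X"
      using e0 e1 by simp
    then show ?thesis using c envE R ER unfolding Ytri_def
      by (auto intro!: exI[of _ Hole] hat.hole)
  qed
qed

definition convX :: "envrel \<Rightarrow> envrel" where
  "convX X = (converse ` fst X, (\<lambda>(E,a,b). (E\<inverse>, b, a)) ` snd X)"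

lemma convX_fst: "E \<in> fst (convX X) \<longleftrightarrow> E\<inverse> \<in> fst X"
  unfolding convX_def by (auto intro: image_eqI[of _ _ "E\<inverse>"])

lemma convX_snd: "(E,a,b) \<in> snd (convX X) \<longleftrightarrow> (E\<inverse>,b,a) \<in> snd X"
  unfolding convX_def by (auto intro: image_eqI[of _ _ "(E\<inverse>,b,a)"])

lemma is_env_conv: "is_env (E\<inverse>) \<longleftrightarrow> is_env E"
  unfolding is_env_def by auto

lemma conv_un: "(E \<union> {(a,b)})\<inverse> = E\<inverse> \<union> {(b,a)}" "(insert (a,b) E)\<inverse> = insert (b,a) (E\<inverse>)" by auto

lemma env_bisim_conv:
  assumes X: "env_bisim X"
  shows "env_bisim (convX X)"
  unfolding env_bisim_def
proof (intro conjI allI impI ballI)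
  show "is_envrel (convX X)"
    using bis_envrel[OF X] unfolding is_envrel_def convX_def by (auto simp: is_env_conv)
next
  fix E t0 t1 assume "(E, t0, t1) \<in> snd (convX X)"
  then have T: "(E\<inverse>, t1, t0) \<in> snd X" by (simp add: convX_snd)
  note B = bis_tri_all[OF X T]
  {
    fix t0' assume "step t0 t0'"
    then show "\<exists>t1'. steps t1 t1' \<and> (E, t0', t1') \<in> snd (convX X)" using B by (simp add: convX_snd)
  next
    assume "is_val t0"
    then show "\<exists>v1. steps t1 v1 \<and> is_val v1 \<and> E \<union> {(t0, v1)} \<in> fst (convX X)"
      using B by (simp add: convX_fst conv_un)
  next
    assume "stuck t0"
    then show "\<exists>t1'. steps t1 t1' \<and> stuck t1' \<and> E \<union> {(t0, t1')} \<in> fst (convX X)"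
      using B by (simp add: convX_fst conv_un)
  next
    fix t1' assume "step t1 t1'"
    then show "\<exists>t0'. steps t0 t0' \<and> (E, t0', t1') \<in> snd (convX X)" using B by (simp add: convX_snd)
  next
    assume "is_val t1"
    then show "\<exists>v0. steps t0 v0 \<and> is_val v0 \<and> E \<union> {(v0, t1)} \<in> fst (convX X)"
      using B by (simp add: convX_fst conv_un)
  next
    assume "stuck t1"
    then show "\<exists>t0'. steps t0 t0' \<and> stuck t0' \<and> E \<union> {(t0', t1)} \<in> fst (convX X)"
      using B by (simp add: convX_fst conv_un)
  }
next
  fix E b0 b1 v0 v1 assume E: "E \<in> fst (convX X)" and p: "(Lam b0, Lam b1) \<in> E" and v: "is_val v0" "is_val v1"
    and tv: "tilde E v0 v1"
  have E': "E\<inverse> \<in> fst X" using E by (simp add: convX_fst)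
  have "(E\<inverse>, inst b1 v1, inst b0 v0) \<in> snd X"
  proof -
    have "(Lam b1, Lam b0) \<in> E\<inverse>" using p by simp
    moreover have "tilde (E\<inverse>) v1 v0" using tv tilde_conv[of E v1 v0] by simp
    ultimately show ?thesis using bis_2a[OF X E' _ v(2) v(1)] by blast
  qed
  then show "(E, inst b0 v0, inst b1 v1) \<in> snd (convX X)" by (simp add: convX_snd)
next
  fix E E0 E1 s0 s1 E0' E1'
  assume E: "E \<in> fst (convX X)" and pE: "pure E0" "pure E1" and p: "(plugF E0 (Shift s0), plugF E1 (Shift s1)) \<in> E"
    and pE': "pure E0'" "pure E1'" and h: "hat E E0' E1'"
  have E': "E\<inverse> \<in> fst X" using E by (simp add: convX_fst)
  have h': "hat (E\<inverse>) E1' E0'" using h hat_conv[of E E1' E0'] by simp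
  have "(E\<inverse>, Reset (inst s1 (Lam (Reset (plugF (liftF E1') (plugF (liftF E1) (Var 0)))))),
       Reset (inst s0 (Lam (Reset (plugF (liftF E0') (plugF (liftF E0) (Var 0))))))) \<in> snd X"
    using bis_2b[OF X E' pE(2) pE(1) _ pE'(2) pE'(1) h'] p by simp
  then show "(E, Reset (inst s0 (Lam (Reset (plugF (liftF E0') (plugF (liftF E0) (Var 0)))))),
       Reset (inst s1 (Lam (Reset (plugF (liftF E1') (plugF (liftF E1) (Var 0))))))) \<in> snd (convX X)"
    by (simp add: convX_snd)
qed

lemma Ytri_conv: "(E,t0,t1) \<in> Ytri X \<Longrightarrow> (E\<inverse>,t1,t0) \<in> Ytri (convX X)"
proof -
  assume T: "(E,t0,t1) \<in> Ytri X"
  from T obtain R where E: "is_env E" and c0: "closed t0" and c1: "closed t1" and R: "R \<in> fst X"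
    and ER: "E \<subseteq> tset R" and D: "tilde_aux R t0 t1 \<or> (\<exists>F0 F1 u0 u1. hat R F0 F1 \<and> t0 = plugF F0 u0 \<and> t1 = plugF F1 u1 \<and> (R,u0,u1) \<in> snd X)"
    unfolding Ytri_def by blast
  have R': "R\<inverse> \<in> fst (convX X)" using R by (simp add: convX_fst)
  have ER': "E\<inverse> \<subseteq> tset (R\<inverse>)" using ER by (auto simp: tset_conv)
  have D': "tilde_aux (R\<inverse>) t1 t0 \<or> (\<exists>F0 F1 u0 u1. hat (R\<inverse>) F0 F1 \<and> t1 = plugF F0 u0 \<and> t0 = plugF F1 u1 \<and> (R\<inverse>,u0,u1) \<in> snd (convX X))"
    using D by (auto simp: tilde_aux_conv hat_conv convX_snd)
  show ?thesis using E c0 c1 R' ER' D' unfolding Ytri_def by (auto simp: is_env_conv)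
qed

lemma Yenv_conv: "E \<in> Yenv (convX X) \<Longrightarrow> E\<inverse> \<in> Yenv X"
proof -
  assume "E \<in> Yenv (convX X)"
  then obtain R where E: "is_env E" and R: "R \<in> fst (convX X)" and ER: "E \<subseteq> tset R" unfolding Yenv_def by blast
  have "R\<inverse> \<in> fst X" using R by (simp add: convX_fst)
  moreover have "E\<inverse> \<subseteq> tset (R\<inverse>)" using ER by (auto simp: tset_conv)
  ultimately show ?thesis using E unfolding Yenv_def by (auto simp: is_env_conv)
qed

lemma Ytri_conv_back: "(E,t0,t1) \<in> Ytri (convX X) \<Longrightarrow> (E\<inverse>,t1,t0) \<in> Ytri X"
proof -
  assume T: "(E,t0,t1) \<in> Ytri (convX X)"
  from T obtain R where E: "is_env E" and c0: "closed t0" and c1: "closed t1" and R: "R \<in> fst (convX X)"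
    and ER: "E \<subseteq> tset R" and D: "tilde_aux R t0 t1 \<or> (\<exists>F0 F1 u0 u1. hat R F0 F1 \<and> t0 = plugF F0 u0 \<and> t1 = plugF F1 u1 \<and> (R,u0,u1) \<in> snd (convX X))"
    unfolding Ytri_def by blast
  have R': "R\<inverse> \<in> fst X" using R by (simp add: convX_fst)
  have ER': "E\<inverse> \<subseteq> tset (R\<inverse>)" using ER by (auto simp: tset_conv)
  have D': "tilde_aux (R\<inverse>) t1 t0 \<or> (\<exists>F0 F1 u0 u1. hat (R\<inverse>) F0 F1 \<and> t1 = plugF F0 u0 \<and> t0 = plugF F1 u1 \<and> (R\<inverse>,u0,u1) \<in> snd X)"
    using D by (auto simp: tilde_aux_conv hat_conv convX_snd)
  show ?thesis using E c0 c1 R' ER' D' unfolding Ytri_def by (auto simp: is_env_conv)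
qed



lemma Y_bisim:
  assumes X: "env_bisim X"
  shows "env_bisim (Yenv X, Ytri X)"
  unfolding env_bisim_def fst_conv snd_conv
proof (intro conjI allI impI ballI)
  show "is_envrel (Yenv X, Ytri X)"
    unfolding is_envrel_def Yenv_def Ytri_def by auto
next
  fix E t0 t1 assume T: "(E, t0, t1) \<in> Ytri X"
  note F = Y_fwd[OF X T]
  note G = Y_fwd[OF env_bisim_conv[OF X] Ytri_conv[OF T]]
  {
    fix t0' assume "step t0 t0'"
    then show "\<exists>t1'. steps t1 t1' \<and> (E, t0', t1') \<in> Ytri X" using F by blast
  next
    assume "is_val t0"
    then show "\<exists>v1. steps t1 v1 \<and> is_val v1 \<and> E \<union> {(t0, v1)} \<in> Yenv X" using F by blast
  next
    assume "stuck t0"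
    then show "\<exists>t1'. steps t1 t1' \<and> stuck t1' \<and> E \<union> {(t0, t1')} \<in> Yenv X" using F by blast
  next
    fix t1' assume "step t1 t1'"
    then obtain t0' where "steps t0 t0'" "(E\<inverse>, t1', t0') \<in> Ytri (convX X)" using G by blast
    then show "\<exists>t0'. steps t0 t0' \<and> (E, t0', t1') \<in> Ytri X" using Ytri_conv_back by fastforce
  next
    assume "is_val t1"
    then obtain v0 where "steps t0 v0" "is_val v0" "E\<inverse> \<union> {(t1, v0)} \<in> Yenv (convX X)" using G by blast
    then show "\<exists>v0. steps t0 v0 \<and> is_val v0 \<and> E \<union> {(v0, t1)} \<in> Yenv X"
      using Yenv_conv[of "E\<inverse> \<union> {(t1, v0)}" X] by (auto simp: conv_un)
  next
    assume "stuck t1"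
    then obtain t0' where "steps t0 t0'" "stuck t0'" "E\<inverse> \<union> {(t1, t0')} \<in> Yenv (convX X)" using G by blast
    then show "\<exists>t0'. steps t0 t0' \<and> stuck t0' \<and> E \<union> {(t0', t1)} \<in> Yenv X"
      using Yenv_conv[of "E\<inverse> \<union> {(t1, t0')}" X] by (auto simp: conv_un)
  }
next
  fix E b0 b1 v0 v1 assume "E \<in> Yenv X" "(Lam b0, Lam b1) \<in> E" "is_val v0" "is_val v1" "tilde E v0 v1"
  then show "(E, inst b0 v0, inst b1 v1) \<in> Ytri X" using Y_2a[OF X] by blast
next
  fix E E0 E1 s0 s1 E0' E1'
  assume "E \<in> Yenv X" "pure E0" "pure E1" "(plugF E0 (Shift s0), plugF E1 (Shift s1)) \<in> E"
    "pure E0'" "pure E1'" "hat E E0' E1'"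
  then show "(E, Reset (inst s0 (Lam (Reset (plugF (liftF E0') (plugF (liftF E0) (Var 0)))))),
       Reset (inst s1 (Lam (Reset (plugF (liftF E1') (plugF (liftF E1) (Var 0))))))) \<in> Ytri X"
    using Y_2b[OF X] by blast
qed

lemma tilde_plugC: "tilde_aux R t0 t1 \<Longrightarrow> tilde_aux R (plugC C t0) (plugC C t1)"
  by (induction C) (auto intro: tilde_aux.intros tilde_aux_refl)

lemma nf_nostep: "normal_form t \<Longrightarrow> \<not> step t x"
  unfolding normal_form_def using val_no_step stuck_no_step by blast

theorem lemma7:
  assumes "is_env \<E>"
    and "closed t0" and "closed t1"
    and "normal_form t0" and "normal_form t1"
    and "bisimilar \<E> t0 t1"
    and "closed (plugC C t0)" and "closed (plugC C t1)"
  shows "bisimilar \<E> (plugC C t0) (plugC C t1)"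
proof -
  from assms(6) obtain X where X: "env_bisim X" and T: "(\<E>, t0, t1) \<in> snd X"
    unfolding bisimilar_def by blast
  have "\<exists>t1'. steps t1 t1' \<and> \<E> \<union> {(t0,t1')} \<in> fst X"
    using assms(4) bis_val[OF X T] bis_stuck[OF X T] unfolding normal_form_def by blast
  then obtain t1' where ss: "steps t1 t1'" and R: "\<E> \<union> {(t0,t1')} \<in> fst X" by blast
  have "t1' = t1" using steps_nostep[OF ss] nf_nostep[OF assms(5)] by blast
  with R have R: "\<E> \<union> {(t0,t1)} \<in> fst X" by simp
  have ER: "\<E> \<subseteq> tset (\<E> \<union> {(t0,t1)})"
    using assms(1) unfolding tset_def tilde_def is_env_def by (auto intro: tilde_aux.base)
  have tl: "tilde_aux (\<E> \<union> {(t0,t1)}) (plugC C t0) (plugC C t1)"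
    by (rule tilde_plugC) (simp add: tilde_aux.base)
  have "(\<E>, plugC C t0, plugC C t1) \<in> Ytri X"
    unfolding Ytri_def using assms(1,7,8) R ER tl by blast
  then show ?thesis unfolding bisimilar_def using Y_bisim[OF X] by (intro exI[of _ "(Yenv X, Ytri X)"]) simp
qed


end
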